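(* For integers $N\ge1$, $m,n$: $$\tau^{m,n}_N(t)=\prod_{k=1}^{N-1}\Big(\frac{q^{n+k-1}b_3}{q^{n+k-1}b_3-1}\Big)^{N-k}\det\big[\widetilde\Psi_{m,n}(t),\widetilde\Psi_{m,n}(qt),\dots,\widetilde\Psi_{m,n}(q^{N-1}t)\big]$$ $$=\prod_{k=1}^{N-1}\Big(\frac{q^{m-k+1}b_1}{q^{m-k+1}b_1-1}\Big)^{N-k}\det\big[\check\Psi_{m,n}(t),\check\Psi_{m,n+1}(t),\dots,\check\Psi_{m,n+N-1}(t)\big]$$ $$=(-1)^{N(N-1)/2}\prod_{k=1}^{N-1}(q^{n+k-1}b_3)^{N-k}\prod_{k=1}^{N-1}\Big(\frac{q^{m-k+1}b_1}{q^{m-k+1}b_1-1}\Big)^{N-k}\det\big[\widehat\Psi_{m,n}(t),\widehat\Psi_{m,n+1}(q^{-1}t),\dots,\widehat\Psi_{m,n+N-1}(q^{-N+1}t)\big].$$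
   Context: $q$ is a fixed nonzero complex constant (generic), $b_1,b_3$ generic parameters with $q^jb_1\neq1$, $q^jb_3\ne1$ for all integers $j$. $\psi(t,b_1,b_3)$ is a function of three variables satisfying, for all values of its arguments: (R1) $\psi(qt,b_1,b_3)=b_1\psi(t,b_1,b_3)+(1-b_1)\psi(qt,b_1/q,b_3)$, (R2) $b_3\psi(qt,b_1,b_3)=\psi(t,b_1,b_3)+(b_3-1)\psi(t,b_1,qb_3)$, (R3) $qtb_1b_3\psi(qt,b_1,b_3)=(qtb_1-1)\psi(t,b_1,b_3)+\psi(t,qb_1,b_3)$, (R4) $qt\psi(qt,b_1,b_3)=(qtb_1-1)\psi(t,b_1,b_3)+\psi(qt,b_1,b_3/q)$. $\tau^{m,n}_N(t)=\det\big(\psi(t,q^{m-j+1}b_1,q^{n+i-1}b_3)\big)_{i,j=1}^N$. Column vectors of height $N$: $\widetilde\Psi_{m,n}(t)$ has $i$-th entry $\psi(t,q^{m-i+1}b_1,q^nb_3)$; $\check\Psi_{m,n}(t)$ has $i$-th entry $\psi(q^{-i+1}t,q^mb_1,q^nb_3)$; $\widehat\Psi_{m,n}(t)$ has $i$-th entry $\psi(q^{i-1}t,q^mb_1,q^nb_3)$ ($i=1,\dots,N$). *)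

theory Defs
  imports Complex_Main "Jordan_Normal_Form.Determinant"
begin

text \<open>Matrices are indexed from 0 (Jordan_Normal_Form); the paper's index i (1..N)
  corresponds to the 0-based index i-1 here.  Integer powers of q are written with powi.\<close>

definition tau :: "(complex \<Rightarrow> complex \<Rightarrow> complex \<Rightarrow> complex) \<Rightarrow> complex \<Rightarrow> complex \<Rightarrow> complex
    \<Rightarrow> int \<Rightarrow> int \<Rightarrow> nat \<Rightarrow> complex \<Rightarrow> complex" where
  "tau psi q b1 b3 m n N t =
     det (mat N N (\<lambda>(i,j). psi t (q powi (m - int j) * b1) (q powi (n + int i) * b3)))"

definition PsiTilde :: "(complex \<Rightarrow> complex \<Rightarrow> complex \<Rightarrow> complex) \<Rightarrow> complex \<Rightarrow> complex \<Rightarrow> complex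
    \<Rightarrow> nat \<Rightarrow> int \<Rightarrow> int \<Rightarrow> complex \<Rightarrow> complex vec" where
  "PsiTilde psi q b1 b3 N m n t = vec N (\<lambda>i. psi t (q powi (m - int i) * b1) (q powi n * b3))"

definition PsiCheck :: "(complex \<Rightarrow> complex \<Rightarrow> complex \<Rightarrow> complex) \<Rightarrow> complex \<Rightarrow> complex \<Rightarrow> complex
    \<Rightarrow> nat \<Rightarrow> int \<Rightarrow> int \<Rightarrow> complex \<Rightarrow> complex vec" where
  "PsiCheck psi q b1 b3 N m n t = vec N (\<lambda>i. psi (q powi (- int i) * t) (q powi m * b1) (q powi n * b3))"

definition PsiHat :: "(complex \<Rightarrow> complex \<Rightarrow> complex \<Rightarrow> complex) \<Rightarrow> complex \<Rightarrow> complex \<Rightarrow> complex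
    \<Rightarrow> nat \<Rightarrow> int \<Rightarrow> int \<Rightarrow> complex \<Rightarrow> complex vec" where
  "PsiHat psi q b1 b3 N m n t = vec N (\<lambda>i. psi (q ^ i * t) (q powi m * b1) (q powi n * b3))"

end

theory Submission
  imports Defs
begin


fun GG :: "(nat \<Rightarrow> complex) \<Rightarrow> (nat \<Rightarrow> complex) \<Rightarrow> nat \<Rightarrow> nat \<Rightarrow> complex" where
  "GG al be 0 a = (if a = 0 then 1 else 0)"
| "GG al be (Suc j) a = al j * (if a = 0 then 0 else GG al be j (a - 1)) + be j * GG al be j a"

lemma GG_zero: "a > j \<Longrightarrow> GG al be j a = 0"
  by (induction j arbitrary: a) auto

lemma GG_diag: "GG al be j j = (\<Prod>k<j. al k)"
  by (induction j) (auto simp: GG_zero)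

lemma GG_0: "GG al be j 0 = (\<Prod>k<j. be k)"
  by (induction j) auto

lemma expand:
  assumes rec: "\<And>j s. X (Suc j) s = al j * X j (sg s) + be j * X j s"
  shows "X j s = (\<Sum>a\<le>j. GG al be j a * X 0 ((sg^^a) s))"
proof (induction j arbitrary: s)
  case 0 then show ?case by simp
next
  case (Suc j)
  have A: "(\<Sum>a\<le>Suc j. (if a = 0 then 0 else GG al be j (a - 1)) * X 0 ((sg^^a) s))
        = (\<Sum>a\<le>j. GG al be j a * X 0 ((sg^^a) (sg s)))"
    by (subst sum.atMost_Suc_shift) (simp add: funpow_swap1)
  have B: "(\<Sum>a\<le>Suc j. GG al be j a * X 0 ((sg^^a) s)) = (\<Sum>a\<le>j. GG al be j a * X 0 ((sg^^a) s))"
    by (simp add: GG_zero)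
  have "(\<Sum>a\<le>Suc j. GG al be (Suc j) a * X 0 ((sg^^a) s))
     = al j * (\<Sum>a\<le>Suc j. (if a = 0 then 0 else GG al be j (a - 1)) * X 0 ((sg^^a) s))
       + be j * (\<Sum>a\<le>Suc j. GG al be j a * X 0 ((sg^^a) s))"
    by (simp add: sum_distrib_left sum.distrib algebra_simps)
  also have "\<dots> = X (Suc j) s" using A B Suc rec by simp
  finally show ?case by simp
qed

lemma det_col_tri:
  fixes A B :: "complex mat"
  assumes "A \<in> carrier_mat N N" "B \<in> carrier_mat N N"
  and "\<And>i j. i<N \<Longrightarrow> j<N \<Longrightarrow> A $$ (i,j) = (\<Sum>a\<le>j. B $$ (i,a) * u j a)"
  shows "det A = det B * (\<Prod>j<N. u j j)"
proof -
  define U where "U = mat N N (\<lambda>(a,j). if a \<le> j then u j a else 0)"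
  have Uc: "U \<in> carrier_mat N N" by (simp add: U_def)
  have "A = B * U"
  proof (rule eq_matI)
    fix i j assume ij: "i < dim_row (B * U)" "j < dim_col (B * U)"
    then have i: "i < N" and j: "j < N" using assms Uc by auto
    have "(B * U) $$ (i,j) = (\<Sum>a\<in>{0..<N}. B $$ (i,a) * U $$ (a,j))"
      using i j assms Uc by (simp add: scalar_prod_def)
    also have "\<dots> = (\<Sum>a\<in>{0..<N}. if a \<le> j then B $$ (i,a) * u j a else 0)"
      by (rule sum.cong) (auto simp: U_def j)
    also have "\<dots> = (\<Sum>a\<in>{0..<N} \<inter> {..j}. B $$ (i,a) * u j a)"
      by (simp add: sum.inter_restrict)
    also have "{0..<N} \<inter> {..j} = {..j}" using j by auto
    finally show "A $$ (i,j) = (B * U) $$ (i,j)" using assms(3)[OF i j] by simp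
  qed (use assms Uc in auto)
  then have "det A = det B * det U" using det_mult assms Uc by metis
  also have "det U = prod_list (diag_mat U)"
    by (rule det_upper_triangular[OF _ Uc]) (auto simp: U_def upper_triangular_def)
  also have "\<dots> = (\<Prod>j<N. u j j)"
    unfolding prod_list_diag_prod using Uc by (intro prod.cong) (auto simp: U_def)
  finally show ?thesis .
qed

lemma prod_tri: "(\<Prod>j<N. \<Prod>k<j. f k) = (\<Prod>k=1..N-1. (f (k-1)::complex) ^ (N - k))"
proof (induction N)
  case 0 then show ?case by simp
next
  case (Suc N)
  show ?case
  proof (cases N)
    case 0 then show ?thesis by simp
  next
    case (Suc M)
    have "(\<Prod>k=1..Suc N-1. f (k-1) ^ (Suc N - k)) = (\<Prod>k=1..N-1. f (k-1) ^ (Suc N - k)) * f (N-1)"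
      using Suc by (simp add: prod.nat_ivl_Suc')
    also have "(\<Prod>k=1..N-1. f (k-1) ^ (Suc N - k)) = (\<Prod>k=1..N-1. f (k-1) ^ (N - k)) * (\<Prod>k=1..N-1. f (k-1))"
      by (subst prod.distrib[symmetric]) (intro prod.cong, auto simp: Suc_diff_le power_Suc2 simp del: power_Suc)
    also have "(\<Prod>k=1..N-1. f (k-1)) = (\<Prod>k<N-1. f k)"
      by (rule prod.reindex_bij_witness[where i="\<lambda>k. k+1" and j="\<lambda>k. k-1"]) auto
    finally have E: "(\<Prod>k=1..Suc N-1. f (k-1) ^ (Suc N - k)) = (\<Prod>k=1..N-1. f (k-1) ^ (N - k)) * (\<Prod>k<N-1. f k) * f (N-1)" .
    have "(\<Prod>j<Suc N. \<Prod>k<j. f k) = (\<Prod>j<N. \<Prod>k<j. f k) * (\<Prod>k<N. f k)" by simp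
    also have "(\<Prod>k<N. f k) = (\<Prod>k<N-1. f k) * f (N-1)" using Suc by (simp add: lessThan_Suc)
    finally show ?thesis using E Suc.IH by (simp add: mult.assoc)
  qed
qed


lemma funpow_mult: "((\<lambda>s. q*s)^^a) s = (q::complex)^a * s"
  by (induction a) auto

lemma funpow_div: "(q::complex) \<noteq> 0 \<Longrightarrow> ((\<lambda>s. s/q)^^a) s = q powi (- int a) * s"
  by (induction a) (auto simp: power_int_diff power_int_minus field_simps)

lemma sum_lt_id: "2 * (\<Sum>j<N. j) = N * (N - 1::nat)"
proof (induction N)
  case (Suc N) then show ?case by (cases N) (auto simp: algebra_simps)
qed simp

lemma prod_neg_one: "(\<Prod>j<N. \<Prod>k<j. (-1::complex)) = (-1) ^ (N * (N - 1) div 2)"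
proof -
  have "(\<Prod>j<N. \<Prod>k<j. (-1::complex)) = (\<Prod>j<N. (-1) ^ j)" by simp
  also have "\<dots> = (-1) ^ (\<Sum>j<N. j)" by (simp add: power_sum)
  also have "(\<Sum>j<N. j) = N * (N - 1) div 2" using sum_lt_id[of N] by linarith
  finally show ?thesis .
qed

lemma solve2: "(cc::complex) - 1 \<noteq> 0 \<Longrightarrow> cc*x = y + (cc-1)*z \<Longrightarrow> z = cc/(cc-1)*x + (-1/(cc-1))*y"
proof -
  assume a: "cc - 1 \<noteq> 0" "cc*x = y + (cc-1)*z"
  have "z = (cc*x - y)/(cc-1)" using a by (simp add: eq_divide_eq algebra_simps)
  also have "\<dots> = cc/(cc-1)*x + (-1/(cc-1))*y" by (simp add: diff_divide_distrib)
  finally show ?thesis .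
qed
lemma solve1: "(dd::complex) - 1 \<noteq> 0 \<Longrightarrow> 1 - dd \<noteq> 0 \<Longrightarrow> ps = dd*pq + (1-dd)*z \<Longrightarrow> z = dd/(dd-1)*pq + 1/(1-dd)*ps"
proof -
  assume a: "dd - 1 \<noteq> 0" "1 - dd \<noteq> 0" "ps = dd*pq + (1-dd)*z"
  have "z = (ps - dd*pq)/(1-dd)" using a by (simp add: eq_divide_eq algebra_simps)
  also have "\<dots> = (-dd)/(1-dd)*pq + 1/(1-dd)*ps" by (simp add: diff_divide_distrib)
  also have "(-dd)/(1-dd) = dd/(dd-1)" by (metis minus_diff_eq minus_divide_divide)
  finally show ?thesis .
qed

theorem lemmaA1:
  fixes psi :: "complex \<Rightarrow> complex \<Rightarrow> complex \<Rightarrow> complex"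
    and q b1 b3 :: complex and m n :: int and N :: nat and t :: complex
  assumes q_nz: "q \<noteq> 0"
    and b1_gen: "\<And>j::int. q powi j * b1 \<noteq> 1"
    and b3_gen: "\<And>j::int. q powi j * b3 \<noteq> 1"
    and R1: "\<And>s c1 c3. psi (q*s) c1 c3 = c1 * psi s c1 c3 + (1 - c1) * psi (q*s) (c1/q) c3"
    and R2: "\<And>s c1 c3. c3 * psi (q*s) c1 c3 = psi s c1 c3 + (c3 - 1) * psi s c1 (q*c3)"
    and R3: "\<And>s c1 c3. q*s*c1*c3 * psi (q*s) c1 c3 = (q*s*c1 - 1) * psi s c1 c3 + psi s (q*c1) c3"
    and R4: "\<And>s c1 c3. q*s * psi (q*s) c1 c3 = (q*s*c1 - 1) * psi s c1 c3 + psi (q*s) c1 (c3/q)"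
    and N_pos: "N \<ge> 1"
  shows
   "tau psi q b1 b3 m n N t =
      (\<Prod>k=1..N-1. ((q powi (n + int k - 1) * b3) / (q powi (n + int k - 1) * b3 - 1)) ^ (N - k))
      * det (mat_of_cols N (map (\<lambda>j. PsiTilde psi q b1 b3 N m n (q ^ j * t)) [0..<N]))
  \<and> tau psi q b1 b3 m n N t =
      (\<Prod>k=1..N-1. ((q powi (m - int k + 1) * b1) / (q powi (m - int k + 1) * b1 - 1)) ^ (N - k))
      * det (mat_of_cols N (map (\<lambda>j. PsiCheck psi q b1 b3 N m (n + int j) t) [0..<N]))
  \<and> tau psi q b1 b3 m n N t =
      (-1) ^ (N * (N - 1) div 2)
      * (\<Prod>k=1..N-1. (q powi (n + int k - 1) * b3) ^ (N - k))
      * (\<Prod>k=1..N-1. ((q powi (m - int k + 1) * b1) / (q powi (m - int k + 1) * b1 - 1)) ^ (N - k))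
      * det (mat_of_cols N (map (\<lambda>j. PsiHat psi q b1 b3 N m (n + int j) (q powi (- int j) * t)) [0..<N]))"
proof -
  define c where "c j = q powi (n + int j) * b3" for j :: nat
  define d where "d i = q powi (m - int i) * b1" for i :: nat
  define al where "al j = c j / (c j - 1)" for j
  define be where "be j = - 1 / (c j - 1)" for j
  define al' where "al' i = d i / (d i - 1)" for i
  define be' where "be' i = 1 / (1 - d i)" for i
  have c1: "c j - 1 \<noteq> 0" for j using b3_gen unfolding c_def by auto
  have d1: "d j - 1 \<noteq> 0" "1 - d j \<noteq> 0" for j using b1_gen unfolding d_def by (auto simp: right_minus_eq)
  have cS: "c (Suc j) = q * c j" for j
    unfolding c_def using q_nz by (simp add: power_int_add algebra_simps)
  have dS: "d (Suc i) = d i / q" for i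
  proof -
    have "q powi (m - int (Suc i)) = q powi (m - int i - 1)" by (simp add: algebra_simps)
    also have "\<dots> = q powi (m - int i) / q" using power_int_diff[of q "m - int i" 1] q_nz by simp
    finally show ?thesis unfolding d_def by simp
  qed
  have expX: "psi s c1 (c j) = (\<Sum>a\<le>j. GG al be j a * psi (q^a * s) c1 (c 0))" for s c1 j
  proof -
    have "(\<lambda>j s. psi s c1 (c j)) j s = (\<Sum>a\<le>j. GG al be j a * (\<lambda>j s. psi s c1 (c j)) 0 (((\<lambda>s. q*s)^^a) s))"
    proof (rule expand)
      fix j s
      have h: "c j * psi (q*s) c1 (c j) = psi s c1 (c j) + (c j - 1) * psi s c1 (q * c j)" by (rule R2)
      show "psi s c1 (c (Suc j)) = al j * psi (q*s) c1 (c j) + be j * psi s c1 (c j)"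
        unfolding cS al_def be_def by (rule solve2[OF c1[of j] h])
    qed
    then show ?thesis by (simp add: funpow_mult)
  qed
  have expY: "psi s (d i) c3 = (\<Sum>a\<le>i. GG al' be' i a * psi (q powi (- int a) * s) (d 0) c3)" for s c3 i
  proof -
    have "(\<lambda>i s. psi s (d i) c3) i s = (\<Sum>a\<le>i. GG al' be' i a * (\<lambda>i s. psi s (d i) c3) 0 (((\<lambda>s. s/q)^^a) s))"
    proof (rule expand)
      fix i s
      have "psi (q*(s/q)) (d i) c3 = d i * psi (s/q) (d i) c3 + (1 - d i) * psi (q*(s/q)) (d i/q) c3" by (rule R1)
      then have h: "psi s (d i) c3 = d i * psi (s/q) (d i) c3 + (1 - d i) * psi s (d i/q) c3" using q_nz by simp
      show "psi s (d (Suc i)) c3 = al' i * psi (s/q) (d i) c3 + be' i * psi s (d i) c3"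
        unfolding dS al'_def be'_def by (rule solve1[OF d1(1)[of i] d1(2)[of i] h])
    qed
    then show ?thesis using q_nz by (simp add: funpow_div)
  qed
  define T where "T = mat N N (\<lambda>(i,j). psi t (q powi (m - int j) * b1) (q powi (n + int i) * b3))"
  have tauT: "tau psi q b1 b3 m n N t = det T" unfolding tau_def T_def ..
  have Tc: "T \<in> carrier_mat N N" unfolding T_def by simp
  have Tij: "T $$ (i,j) = psi t (d j) (c i)" if "i < N" "j < N" for i j
    using that unfolding T_def c_def d_def by simp
  define B1 where "B1 = mat_of_cols N (map (\<lambda>j. PsiTilde psi q b1 b3 N m n (q ^ j * t)) [0..<N])"
  have B1c: "B1 \<in> carrier_mat N N" unfolding B1_def by (simp add: mat_of_cols_def)
  have B1ij: "B1 $$ (i,a) = psi (q^a * t) (d i) (c 0)" if "i < N" "a < N" for i a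
    using that unfolding B1_def PsiTilde_def c_def d_def by (simp add: mat_of_cols_index)
  have "det (transpose_mat T) = det B1 * (\<Prod>j<N. GG al be j j)"
  proof (rule det_col_tri[where u="GG al be"])
    show "transpose_mat T \<in> carrier_mat N N" using Tc by simp
    show "B1 \<in> carrier_mat N N" by (rule B1c)
    fix i j assume ij: "i < N" "j < N"
    have "transpose_mat T $$ (i,j) = psi t (d i) (c j)" using ij Tc Tij by simp
    also have "\<dots> = (\<Sum>a\<le>j. GG al be j a * psi (q^a * t) (d i) (c 0))" by (rule expX)
    also have "\<dots> = (\<Sum>a\<le>j. B1 $$ (i,a) * GG al be j a)"
      by (rule sum.cong) (use ij in \<open>auto simp: B1ij\<close>)
    finally show "transpose_mat T $$ (i,j) = (\<Sum>a\<le>j. B1 $$ (i,a) * GG al be j a)" .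
  qed
  then have I1: "det T = det B1 * (\<Prod>k=1..N-1. (al (k-1)) ^ (N - k))"
    using det_transpose[OF Tc] by (simp add: GG_diag prod_tri)
  have P1: "(\<Prod>k=1..N-1. (al (k-1)) ^ (N - k)) =
     (\<Prod>k=1..N-1. ((q powi (n + int k - 1) * b3) / (q powi (n + int k - 1) * b3 - 1)) ^ (N - k))"
    by (rule prod.cong) (auto simp: al_def c_def of_nat_diff add_diff_eq)
  define C where "C = mat_of_cols N (map (\<lambda>j. PsiCheck psi q b1 b3 N m (n + int j) t) [0..<N])"
  have Cc: "C \<in> carrier_mat N N" unfolding C_def by (simp add: mat_of_cols_def)
  have Cij: "C $$ (i,j) = psi (q powi (- int i) * t) (d 0) (c j)" if "i < N" "j < N" for i j
    using that unfolding C_def PsiCheck_def c_def d_def by (simp add: mat_of_cols_index)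
  have "det T = det (transpose_mat C) * (\<Prod>j<N. GG al' be' j j)"
  proof (rule det_col_tri[where u="GG al' be'"])
    show "T \<in> carrier_mat N N" by (rule Tc)
    show "transpose_mat C \<in> carrier_mat N N" using Cc by simp
    fix i j assume ij: "i < N" "j < N"
    have "T $$ (i,j) = psi t (d j) (c i)" using ij Tij by simp
    also have "\<dots> = (\<Sum>a\<le>j. GG al' be' j a * psi (q powi (- int a) * t) (d 0) (c i))" by (rule expY)
    also have "\<dots> = (\<Sum>a\<le>j. transpose_mat C $$ (i,a) * GG al' be' j a)"
      by (rule sum.cong) (use ij Cc in \<open>auto simp: Cij\<close>)
    finally show "T $$ (i,j) = (\<Sum>a\<le>j. transpose_mat C $$ (i,a) * GG al' be' j a)" .
  qed
  then have I2: "det T = det C * (\<Prod>k=1..N-1. (al' (k-1)) ^ (N - k))"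
    using det_transpose[OF Cc] by (simp add: GG_diag prod_tri)
  have P2: "(\<Prod>k=1..N-1. (al' (k-1)) ^ (N - k)) =
     (\<Prod>k=1..N-1. ((q powi (m - int k + 1) * b1) / (q powi (m - int k + 1) * b1 - 1)) ^ (N - k))"
    by (rule prod.cong) (auto simp: al'_def d_def of_nat_diff diff_diff_eq2 diff_add_eq)
  define F where "F = mat N N (\<lambda>(i,a). psi (q powi (int a - int i) * t) (d 0) (c 0))"
  have Fc: "F \<in> carrier_mat N N" unfolding F_def by simp
  have "det C = det F * (\<Prod>j<N. GG al be j j)"
  proof (rule det_col_tri[OF Cc Fc, where u="GG al be"])
    fix i j assume ij: "i < N" "j < N"
    have "C $$ (i,j) = psi (q powi (- int i) * t) (d 0) (c j)" using ij Cij by simp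
    also have "\<dots> = (\<Sum>a\<le>j. GG al be j a * psi (q^a * (q powi (- int i) * t)) (d 0) (c 0))" by (rule expX)
    also have "\<dots> = (\<Sum>a\<le>j. F $$ (i,a) * GG al be j a)"
      by (rule sum.cong) (use ij q_nz in \<open>auto simp: F_def power_int_diff power_int_minus field_simps\<close>)
    finally show "C $$ (i,j) = (\<Sum>a\<le>j. F $$ (i,a) * GG al be j a)" .
  qed
  define H where "H = mat_of_cols N (map (\<lambda>j. PsiHat psi q b1 b3 N m (n + int j) (q powi (- int j) * t)) [0..<N])"
  have Hc: "H \<in> carrier_mat N N" unfolding H_def by (simp add: mat_of_cols_def)
  have Hij: "H $$ (i,j) = psi (q^i * (q powi (- int j) * t)) (d 0) (c j)" if "i < N" "j < N" for i j
    using that unfolding H_def PsiHat_def c_def d_def by (simp add: mat_of_cols_index)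
  have "det H = det (transpose_mat F) * (\<Prod>j<N. GG al be j (j - j))"
  proof (rule det_col_tri[OF Hc, where u="\<lambda>j r. GG al be j (j - r)"])
    show "transpose_mat F \<in> carrier_mat N N" using Fc by simp
    fix i j assume ij: "i < N" "j < N"
    have "H $$ (i,j) = psi (q^i * (q powi (- int j) * t)) (d 0) (c j)" using ij Hij by simp
    also have "\<dots> = (\<Sum>a\<le>j. GG al be j a * psi (q^a * (q^i * (q powi (- int j) * t))) (d 0) (c 0))" by (rule expX)
    also have "\<dots> = (\<Sum>r\<le>j. GG al be j (j - r) * psi (q^(j-r) * (q^i * (q powi (- int j) * t))) (d 0) (c 0))"
      by (rule sum.reindex_bij_witness[where i="\<lambda>a. j - a" and j="\<lambda>a. j - a"]) auto
    also have "\<dots> = (\<Sum>r\<le>j. transpose_mat F $$ (i,r) * GG al be j (j - r))"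
    proof (rule sum.cong)
      fix r assume r: "r \<in> {..j}"
      have eq: "q^(j-r) * (q^i * (q powi (- int j) * t)) = q powi (int i - int r) * t"
        using r q_nz by (simp add: power_int_diff power_int_minus field_simps flip: power_int_of_nat)
      show "GG al be j (j - r) * psi (q^(j-r) * (q^i * (q powi (- int j) * t))) (d 0) (c 0)
          = transpose_mat F $$ (i,r) * GG al be j (j - r)" unfolding eq using r ij by (simp add: F_def)
    qed simp
    finally show "H $$ (i,j) = (\<Sum>r\<le>j. transpose_mat F $$ (i,r) * GG al be j (j - r))" .
  qed
  then have dH: "det H = det F * (\<Prod>j<N. \<Prod>k<j. be k)" using det_transpose[OF Fc] by (simp add: GG_0)
  have alf: "al k = (-1) * c k * be k" for k unfolding al_def be_def by simp
  have "(\<Prod>j<N. GG al be j j) = (\<Prod>j<N. \<Prod>k<j. (-1::complex)) * (\<Prod>j<N. \<Prod>k<j. c k) * (\<Prod>j<N. \<Prod>k<j. be k)"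
    unfolding GG_diag alf prod.distrib by (rule refl)
  also have "(\<Prod>j<N. \<Prod>k<j. (-1::complex)) = (-1) ^ (N * (N - 1) div 2)" by (rule prod_neg_one)
  also have "(\<Prod>j<N. \<Prod>k<j. c k) = (\<Prod>k=1..N-1. (q powi (n + int k - 1) * b3) ^ (N - k))"
    by (subst prod_tri) (rule prod.cong, auto simp: c_def of_nat_diff add_diff_eq)
  finally have PG: "(\<Prod>j<N. GG al be j j) = (-1) ^ (N * (N - 1) div 2) * (\<Prod>k=1..N-1. (q powi (n + int k - 1) * b3) ^ (N - k)) * (\<Prod>j<N. \<Prod>k<j. be k)" .
  have I3: "det C = (-1) ^ (N * (N - 1) div 2) * (\<Prod>k=1..N-1. (q powi (n + int k - 1) * b3) ^ (N - k)) * det H"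
    unfolding dH \<open>det C = _\<close> PG by (simp only: mult_ac)
  show ?thesis
    using tauT I1 P1 I2 P2 I3 unfolding B1_def C_def H_def by (simp add: algebra_simps)
qed

end
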